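(* For every $\lambda>0$, the function $F_\lambda(e)=F(\lambda,e)$ is strictly convex on $I_\lambda$; indeed $\partial_{ee}^2F(\lambda,e)>0$ for all $e\in I_\lambda$.
   Context: Let $\gamma>0$; let $a_1,\dots,a_p>0$ with weights $\omega_i>0$, $\sum_i\omega_i=1$, and $b_1,\dots,b_n>0$ with weights $\pi_j>0$, $\sum_j\pi_j=1$; put $a^*=\max_i a_i$, $b^*=\max_j b_j$. Define $G(e)=\sum_{j=1}^n\frac{b_j\pi_j}{1+\gamma b_j e}$, $J=\{e: e>-1/(\gamma b^* )\}$, and for $\lambda>0$, $I_\lambda=\{e\in J: G(e)<\lambda/a^*\}$. Define $F(\lambda,e)=e-\sum_{i=1}^p\frac{a_i\omega_i}{a_iG(e)-\lambda}$. *)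

theory Defs
  imports "HOL-Analysis.Analysis"
begin

definition strict_convex_on :: "real set \<Rightarrow> (real \<Rightarrow> real) \<Rightarrow> bool" where
  "strict_convex_on S f \<longleftrightarrow> convex S \<and>
     (\<forall>x\<in>S. \<forall>y\<in>S. x \<noteq> y \<longrightarrow> (\<forall>u::real. 0 < u \<and> u < 1 \<longrightarrow>
        f (u * x + (1 - u) * y) < u * f x + (1 - u) * f y))"

definition Gfun :: "real \<Rightarrow> nat \<Rightarrow> (nat \<Rightarrow> real) \<Rightarrow> (nat \<Rightarrow> real) \<Rightarrow> real \<Rightarrow> real" where
  "Gfun \<gamma> n b \<pi> e = (\<Sum>j=1..n. b j * \<pi> j / (1 + \<gamma> * b j * e))"

definition Jset :: "real \<Rightarrow> nat \<Rightarrow> (nat \<Rightarrow> real) \<Rightarrow> real set" where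
  "Jset \<gamma> n b = {e. e > - 1 / (\<gamma> * Max (b ` {1..n}))}"

definition Iset :: "real \<Rightarrow> nat \<Rightarrow> (nat \<Rightarrow> real) \<Rightarrow> nat \<Rightarrow> (nat \<Rightarrow> real) \<Rightarrow> (nat \<Rightarrow> real)
    \<Rightarrow> real \<Rightarrow> real set" where
  "Iset \<gamma> p a n b \<pi> lam = {e \<in> Jset \<gamma> n b. Gfun \<gamma> n b \<pi> e < lam / Max (a ` {1..p})}"

definition Ffun :: "real \<Rightarrow> nat \<Rightarrow> (nat \<Rightarrow> real) \<Rightarrow> (nat \<Rightarrow> real) \<Rightarrow> nat \<Rightarrow> (nat \<Rightarrow> real)
    \<Rightarrow> (nat \<Rightarrow> real) \<Rightarrow> real \<Rightarrow> real \<Rightarrow> real" where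
  "Ffun \<gamma> p a \<omega> n b \<pi> lam e =
     e - (\<Sum>i=1..p. a i * \<omega> i / (a i * Gfun \<gamma> n b \<pi> e - lam))"

end

theory Submission
  imports Defs
begin
lemma d_inv:
  fixes g :: "real \<Rightarrow> real"
  assumes "(g has_real_derivative g') (at x)" "g x \<noteq> 0"
  shows "((\<lambda>x. c / g x) has_real_derivative - c * g' / (g x)^2) (at x)"
  using assms by (auto intro!: derivative_eq_intros simp: field_simps power2_eq_square)

lemma d_inv_sq:
  fixes h :: "real \<Rightarrow> real"
  assumes "(h has_real_derivative h') (at x)" "h x \<noteq> 0"
  shows "((\<lambda>x. c / (h x)^2) has_real_derivative - 2 * c * h' / (h x)^3) (at x)"
  using assms by (auto intro!: derivative_eq_intros simp: field_simps power2_eq_square power3_eq_cube)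

lemma d_quot_sq:
  fixes g h :: "real \<Rightarrow> real"
  assumes "(g has_real_derivative g') (at x)" "(h has_real_derivative h') (at x)" "h x \<noteq> 0"
  shows "((\<lambda>x. c * g x / (h x)^2) has_real_derivative c * (g' / (h x)^2 - 2 * g x * h' / (h x)^3)) (at x)"
  using assms by (auto intro!: derivative_eq_intros simp: field_simps power2_eq_square power3_eq_cube)

lemma strict_convex_from_f'':
  fixes S :: "real set"
  assumes conv: "convex S"
    and d1: "\<And>x. x \<in> S \<Longrightarrow> (f has_real_derivative f' x) (at x)"
    and d2: "\<And>x. x \<in> S \<Longrightarrow> (f' has_real_derivative f'' x) (at x)"
    and pos: "\<And>x. x \<in> S \<Longrightarrow> f'' x > 0"
  shows "strict_convex_on S f"
proof -
  have iv: "\<And>x y z. x \<in> S \<Longrightarrow> y \<in> S \<Longrightarrow> x \<le> z \<Longrightarrow> z \<le> y \<Longrightarrow> z \<in> S"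
    using conv unfolding is_interval_convex_1[symmetric] is_interval_1 by blast
  have mono: "f' x < f' y" if "x \<in> S" "y \<in> S" "x < y" for x y
  proof -
    have "\<exists>z. x < z \<and> z < y \<and> f' y - f' x = (y - x) * f'' z"
    proof (rule MVT2[OF \<open>x<y\<close>])
      fix t assume "x \<le> t" "t \<le> y"
      then have "t \<in> S" using iv that by blast
      then show "(f' has_real_derivative f'' t) (at t)" by (rule d2)
    qed
    then obtain z where z: "x < z" "z < y" "f' y - f' x = (y - x) * f'' z" by blast
    have "z \<in> S" using iv that z by (meson less_imp_le)
    then have "f'' z > 0" by (rule pos)
    then have "(y - x) * f'' z > 0" using \<open>x<y\<close> by simp
    then show ?thesis using z by linarith
  qed
  have key: "f (u * x + (1 - u) * y) < u * f x + (1 - u) * f y"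
    if "x \<in> S" "y \<in> S" "x < y" "0 < u" "u < 1" for x y u :: real
  proof -
    define z where "z = u * x + (1 - u) * y"
    have e1: "z - x = (1 - u) * (y - x)" unfolding z_def by algebra
    have e2: "y - z = u * (y - x)" unfolding z_def by algebra
    have "(1 - u) * (y - x) > 0" using that by simp
    then have xz: "x < z" using e1 by linarith
    have "u * (y - x) > 0" using that by simp
    then have zy: "z < y" using e2 by linarith
    have zS: "z \<in> S" using iv that xz zy by (meson less_imp_le)
    have "\<exists>c. x < c \<and> c < z \<and> f z - f x = (z - x) * f' c"
    proof (rule MVT2[OF xz])
      fix t assume "x \<le> t" "t \<le> z"
      then have "t \<in> S" using iv that zS by blast
      then show "(f has_real_derivative f' t) (at t)" by (rule d1)
    qed
    then obtain c1 where c1: "x < c1" "c1 < z" "f z - f x = (z - x) * f' c1" by blast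
    have "\<exists>c. z < c \<and> c < y \<and> f y - f z = (y - z) * f' c"
    proof (rule MVT2[OF zy])
      fix t assume "z \<le> t" "t \<le> y"
      then have "t \<in> S" using iv that zS by blast
      then show "(f has_real_derivative f' t) (at t)" by (rule d1)
    qed
    then obtain c2 where c2: "z < c2" "c2 < y" "f y - f z = (y - z) * f' c2" by blast
    have c1S: "c1 \<in> S" using iv that zS c1 by (meson less_imp_le)
    have c2S: "c2 \<in> S" using iv that zS c2 by (meson less_imp_le)
    have "f' c1 < f' c2" using mono[OF c1S c2S] c1 c2 by linarith
    have "f z - (u * f x + (1 - u) * f y) = u * (f z - f x) - (1 - u) * (f y - f z)"
      by algebra
    also have "\<dots> = u * (1 - u) * (y - x) * (f' c1 - f' c2)"
      unfolding c1(3) c2(3) e1 e2 by algebra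
    also have "\<dots> < 0"
      using \<open>f' c1 < f' c2\<close> that by (intro mult_pos_neg) auto
    finally show ?thesis unfolding z_def by simp
  qed
  show ?thesis unfolding strict_convex_on_def
  proof (intro conjI conv ballI impI allI)
    fix x y and u :: real assume "x \<in> S" "y \<in> S" "x \<noteq> y" and u: "0 < u \<and> u < 1"
    show "f (u * x + (1 - u) * y) < u * f x + (1 - u) * f y"
    proof (cases "x < y")
      case True then show ?thesis using key \<open>x\<in>S\<close> \<open>y\<in>S\<close> u by blast
    next
      case False
      then have "y < x" using \<open>x\<noteq>y\<close> by simp
      from key[OF \<open>y\<in>S\<close> \<open>x\<in>S\<close> this, of "1-u"] u show ?thesis
        by (simp add: algebra_simps)
    qed
  qed
qed

theorem main:
  fixes \<gamma> :: real and p n :: nat and a \<omega> b \<pi> :: "nat \<Rightarrow> real"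
  assumes gam: "\<gamma> > 0"
    and apos: "\<forall>i\<in>{1..p}. a i > 0" and wpos: "\<forall>i\<in>{1..p}. \<omega> i > 0" and wsum: "(\<Sum>i=1..p. \<omega> i) = 1"
    and bpos: "\<forall>j\<in>{1..n}. b j > 0" and ppos: "\<forall>j\<in>{1..n}. \<pi> j > 0" and psum: "(\<Sum>j=1..n. \<pi> j) = 1"
    and lam: "lam > 0"
  shows "strict_convex_on (Iset \<gamma> p a n b \<pi> lam) (Ffun \<gamma> p a \<omega> n b \<pi> lam)
         \<and> (\<forall>e\<in>Iset \<gamma> p a n b \<pi> lam. deriv (deriv (Ffun \<gamma> p a \<omega> n b \<pi> lam)) e > 0)"
proof -
  have p1: "{1..p} \<noteq> {}" using wsum by (metis sum.empty zero_neq_one)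
  have n1: "{1..n} \<noteq> {}" using psum by (metis sum.empty zero_neq_one)
  define bm where "bm = Max (b ` {1..n})"
  define am where "am = Max (a ` {1..p})"
  have bm_ge: "b j \<le> bm" if "j \<in> {1..n}" for j unfolding bm_def using that by simp
  have am_ge: "a i \<le> am" if "i \<in> {1..p}" for i unfolding am_def using that by simp
  have bm_pos: "bm > 0" using bm_ge bpos n1 by fastforce
  have am_pos: "am > 0" using am_ge apos p1 by fastforce
  define J where "J = {e::real. e > - 1 / (\<gamma> * bm)}"
  have J_eq: "Jset \<gamma> n b = J" unfolding Jset_def J_def bm_def by simp
  define G where "G = Gfun \<gamma> n b \<pi>"
  have Gd_def': "G = (\<lambda>x. \<Sum>j=1..n. b j * \<pi> j / (1 + \<gamma> * b j * x))"
    unfolding G_def Gfun_def by auto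
  define I where "I = {e \<in> J. G e < lam / am}"
  have I_eq: "Iset \<gamma> p a n b \<pi> lam = I" unfolding Iset_def I_def J_eq G_def am_def by simp
  define F where "F = Ffun \<gamma> p a \<omega> n b \<pi> lam"
  have F_eq: "F = (\<lambda>e. e - (\<Sum>i=1..p. a i * \<omega> i / (a i * G e - lam)))"
    unfolding F_def Ffun_def G_def by auto
  have den_pos: "1 + \<gamma> * b j * x > 0" if "x \<in> J" "j \<in> {1..n}" for x j
  proof (cases "x \<ge> 0")
    case True
    have "b j > 0" using bpos that by auto
    then have "\<gamma> * b j * x \<ge> 0" using gam True by simp
    then show ?thesis by simp
  next
    case False
    have "x > - 1 / (\<gamma> * bm)" using that unfolding J_def by simp
    then have "\<gamma> * bm * x > -1" using gam bm_pos by (simp add: field_simps)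
    moreover have "b j * x \<ge> bm * x" using False bm_ge[OF that(2)] by (simp add: mult_right_mono_neg)
    ultimately have "\<gamma> * b j * x > -1" using gam
      by (smt (verit) mult.assoc mult_left_mono)
    then show ?thesis by simp
  qed
  define Gd where "Gd = (\<lambda>x. \<Sum>j=1..n. - (b j * \<pi> j * (\<gamma> * b j)) / (1 + \<gamma> * b j * x)^2)"
  define Gdd where "Gdd = (\<lambda>x. \<Sum>j=1..n. - 2 * (- (b j * \<pi> j * (\<gamma> * b j))) * (\<gamma> * b j) / (1 + \<gamma> * b j * x)^3)"
  have dG: "(G has_real_derivative Gd x) (at x)" if "x \<in> J" for x
    unfolding Gd_def' Gd_def
  proof (rule DERIV_sum)
    fix j assume j: "j \<in> {1..n}"
    have "((\<lambda>x. 1 + \<gamma> * b j * x) has_real_derivative \<gamma> * b j) (at x)"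
      by (auto intro!: derivative_eq_intros)
    from d_inv[OF this, of "b j * \<pi> j"] den_pos[OF that j]
    show "((\<lambda>x. b j * \<pi> j / (1 + \<gamma> * b j * x)) has_real_derivative
        - (b j * \<pi> j * (\<gamma> * b j)) / (1 + \<gamma> * b j * x)\<^sup>2) (at x)"
      by simp
  qed
  have dGd: "(Gd has_real_derivative Gdd x) (at x)" if "x \<in> J" for x
    unfolding Gd_def Gdd_def
  proof (rule DERIV_sum)
    fix j assume j: "j \<in> {1..n}"
    have "((\<lambda>x. 1 + \<gamma> * b j * x) has_real_derivative \<gamma> * b j) (at x)"
      by (auto intro!: derivative_eq_intros)
    from d_inv_sq[OF this, of "- (b j * \<pi> j * (\<gamma> * b j))"] den_pos[OF that j]
    show "((\<lambda>x. - (b j * \<pi> j * (\<gamma> * b j)) / (1 + \<gamma> * b j * x)^2) has_real_derivative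
        - 2 * (- (b j * \<pi> j * (\<gamma> * b j))) * (\<gamma> * b j) / (1 + \<gamma> * b j * x)^3) (at x)"
      by simp
  qed
  have Gdd_pos: "Gdd x > 0" if "x \<in> J" for x
    unfolding Gdd_def
  proof (rule sum_pos)
    fix j assume j: "j \<in> {1..n}"
    have "1 + \<gamma> * b j * x > 0" using den_pos[OF that j] .
    then have "(1 + \<gamma> * b j * x)^3 > 0" by simp
    moreover have "b j * \<pi> j * (\<gamma> * b j) * (\<gamma> * b j) > 0"
      using gam bpos ppos j by simp
    ultimately show "- 2 * (- (b j * \<pi> j * (\<gamma> * b j))) * (\<gamma> * b j) / (1 + \<gamma> * b j * x)^3 > 0"
      by (simp add: field_simps)
  qed (use n1 in auto)
  have G_pos: "G x > 0" if "x \<in> J" for x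
    unfolding Gd_def'
  proof (rule sum_pos)
    fix j assume j: "j \<in> {1..n}"
    show "b j * \<pi> j / (1 + \<gamma> * b j * x) > 0" using den_pos[OF that j] bpos ppos j by simp
  qed (use n1 in auto)
  have d_neg: "a i * G x - lam < 0" if "x \<in> I" "i \<in> {1..p}" for x i
  proof -
    have "G x < lam / am" "x \<in> J" using that unfolding I_def by auto
    then have "am * G x < lam" using am_pos by (simp add: field_simps)
    moreover have "a i * G x \<le> am * G x" using am_ge[OF that(2)] G_pos[OF \<open>x\<in>J\<close>]
      by (simp add: mult_right_mono)
    ultimately show ?thesis by simp
  qed
  define Fd where "Fd = (\<lambda>x. 1 + (\<Sum>i=1..p. a i ^ 2 * \<omega> i * Gd x / (a i * G x - lam)^2))"
  define Fdd where "Fdd = (\<lambda>x. \<Sum>i=1..p. a i ^ 2 * \<omega> i * (Gdd x / (a i * G x - lam)^2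
      - 2 * Gd x * (a i * Gd x) / (a i * G x - lam)^3))"
  have IJ: "I \<subseteq> J" unfolding I_def by auto
  have dF: "(F has_real_derivative Fd x) (at x)" if "x \<in> I" for x
  proof -
    have xJ: "x \<in> J" using IJ that by auto
    have "((\<lambda>e. \<Sum>i=1..p. a i * \<omega> i / (a i * G e - lam)) has_real_derivative
        (\<Sum>i=1..p. - (a i * \<omega> i) * (a i * Gd x) / (a i * G x - lam)^2)) (at x)"
    proof (rule DERIV_sum)
      fix i assume i: "i \<in> {1..p}"
      have "((\<lambda>e. a i * G e - lam) has_real_derivative a i * Gd x) (at x)"
        using dG[OF xJ] by (auto intro!: derivative_eq_intros)
      from d_inv[OF this, of "a i * \<omega> i"] d_neg[OF that i]
      show "((\<lambda>e. a i * \<omega> i / (a i * G e - lam)) has_real_derivative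
          - (a i * \<omega> i) * (a i * Gd x) / (a i * G x - lam)^2) (at x)" by simp
    qed
    then have "(F has_real_derivative 1 - (\<Sum>i=1..p. - (a i * \<omega> i) * (a i * Gd x) / (a i * G x - lam)^2)) (at x)"
      unfolding F_eq by (rule DERIV_diff[OF DERIV_ident])
    moreover have "1 - (\<Sum>i=1..p. - (a i * \<omega> i) * (a i * Gd x) / (a i * G x - lam)^2) = Fd x"
      unfolding Fd_def by (simp add: sum_negf power2_eq_square algebra_simps)
    ultimately show ?thesis by simp
  qed
  have dFd: "(Fd has_real_derivative Fdd x) (at x)" if "x \<in> I" for x
  proof -
    have xJ: "x \<in> J" using IJ that by auto
    have "((\<lambda>e. \<Sum>i=1..p. a i ^ 2 * \<omega> i * Gd e / (a i * G e - lam)^2) has_real_derivative Fdd x) (at x)"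
      unfolding Fdd_def
    proof (rule DERIV_sum)
      fix i assume i: "i \<in> {1..p}"
      have "((\<lambda>e. a i * G e - lam) has_real_derivative a i * Gd x) (at x)"
        using dG[OF xJ] by (auto intro!: derivative_eq_intros)
      from d_quot_sq[OF dGd[OF xJ] this, of "a i ^ 2 * \<omega> i"] d_neg[OF that i]
      show "((\<lambda>e. a i ^ 2 * \<omega> i * Gd e / (a i * G e - lam)^2) has_real_derivative
          a i ^ 2 * \<omega> i * (Gdd x / (a i * G x - lam)^2
      - 2 * Gd x * (a i * Gd x) / (a i * G x - lam)^3)) (at x)" by simp
    qed
    from DERIV_add[OF DERIV_const[of 1] this] show ?thesis unfolding Fd_def by simp
  qed
  have Fdd_pos: "Fdd x > 0" if "x \<in> I" for x
    unfolding Fdd_def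
  proof (rule sum_pos)
    fix i assume i: "i \<in> {1..p}"
    have xJ: "x \<in> J" using IJ that by auto
    define d where "d = a i * G x - lam"
    have dn: "d < 0" unfolding d_def using d_neg[OF that i] .
    have "Gdd x / d^2 > 0" using Gdd_pos[OF xJ] dn by simp
    moreover have "2 * Gd x * (a i * Gd x) \<ge> 0"
    proof -
      have "a i > 0" using apos i by auto
      then have "a i * (Gd x * Gd x) \<ge> 0" by simp
      then show ?thesis by (simp add: algebra_simps)
    qed
    moreover have "d^3 < 0" using dn by (simp add: power3_eq_cube mult_neg_neg mult_pos_neg)
    ultimately have "Gdd x / d^2 - 2 * Gd x * (a i * Gd x) / d^3 > 0"
      by (smt (verit) divide_nonneg_neg)
    moreover have "a i ^ 2 * \<omega> i > 0"
    proof -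
      have "a i > 0" "\<omega> i > 0" using apos wpos i by auto
      then show ?thesis by simp
    qed
    ultimately show "a i ^ 2 * \<omega> i * (Gdd x / (a i * G x - lam)^2
      - 2 * Gd x * (a i * Gd x) / (a i * G x - lam)^3) > 0" unfolding d_def by simp
  qed (use p1 in auto)
  have Jopen: "open J" unfolding J_def by (simp add: open_greaterThan[unfolded greaterThan_def])
  have Gcont: "continuous_on J G"
    using dG by (meson DERIV_isCont continuous_at_imp_continuous_on)
  have Iopen: "open I"
  proof -
    have "I = J \<inter> G -` {..< lam / am}" unfolding I_def by auto
    then show ?thesis using continuous_open_preimage[OF Gcont Jopen] by auto
  qed
  have Iconv: "convex I"
    unfolding is_interval_convex_1[symmetric] is_interval_1
  proof (intro ballI allI impI)
    fix x y z assume xI: "x \<in> I" and yI: "y \<in> I" and xz: "x \<le> z \<and> z \<le> y"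
    have zJ: "z \<in> J" using xI xz unfolding I_def J_def by auto
    have "G z \<le> G x" unfolding Gd_def'
    proof (rule sum_mono)
      fix j assume j: "j \<in> {1..n}"
      have "1 + \<gamma> * b j * x \<le> 1 + \<gamma> * b j * z" using gam bpos j xz
        by (simp add: mult_left_mono)
      moreover have "b j * \<pi> j \<ge> 0"
      proof -
        have "b j > 0" "\<pi> j > 0" using bpos ppos j by auto
        then show ?thesis by simp
      qed
      ultimately show "b j * \<pi> j / (1 + \<gamma> * b j * z) \<le> b j * \<pi> j / (1 + \<gamma> * b j * x)"
        using den_pos[of x j] xI IJ j
        by (intro divide_left_mono) auto
    qed
    then show "z \<in> I" using zJ xI unfolding I_def by auto
  qed
  have "strict_convex_on I F"
    by (rule strict_convex_from_f''[OF Iconv dF dFd Fdd_pos])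
  moreover have "deriv (deriv F) e > 0" if "e \<in> I" for e
  proof -
    have "eventually (\<lambda>x. x \<in> I) (nhds e)" using Iopen that by (rule eventually_nhds_in_open)
    then have "eventually (\<lambda>x. deriv F x = Fd x) (nhds e)"
      by eventually_elim (use dF DERIV_imp_deriv in blast)
    then have "deriv (deriv F) e = deriv Fd e" by (rule deriv_cong_ev) simp
    also have "\<dots> = Fdd e" using dFd[OF that] by (rule DERIV_imp_deriv)
    finally show ?thesis using Fdd_pos[OF that] by simp
  qed
  ultimately show ?thesis unfolding I_eq F_def by auto
qed

theorem lemma3p8:
  fixes \<gamma> :: real and p n :: nat and a \<omega> b \<pi> :: "nat \<Rightarrow> real"
  assumes "\<gamma> > 0"
    and "\<forall>i\<in>{1..p}. a i > 0" and "\<forall>i\<in>{1..p}. \<omega> i > 0" and "(\<Sum>i=1..p. \<omega> i) = 1"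
    and "\<forall>j\<in>{1..n}. b j > 0" and "\<forall>j\<in>{1..n}. \<pi> j > 0" and "(\<Sum>j=1..n. \<pi> j) = 1"
  shows "\<forall>lam::real. lam > 0 \<longrightarrow>
           strict_convex_on (Iset \<gamma> p a n b \<pi> lam) (Ffun \<gamma> p a \<omega> n b \<pi> lam)
         \<and> (\<forall>e\<in>Iset \<gamma> p a n b \<pi> lam. deriv (deriv (Ffun \<gamma> p a \<omega> n b \<pi> lam)) e > 0)"
  using main[OF assms] by blast

end
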